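(* Let $\alpha>-\tfrac12$ be a real number which is not an integer. For $R\in]0,1[$ let $\varphi_{\alpha,R}(\theta)=(1-Re^{i\theta})^{\alpha}(1+Re^{-i\theta})^{\alpha}$ for $\theta\in]-\pi,\pi]$, and let $\varphi_\alpha=\lim_{R\to1^-}\varphi_{\alpha,R}$. Then the Fourier coefficients $\widehat{\varphi_\alpha}(n)$ satisfy $$\widehat{\varphi_\alpha}(n)=\frac{2^{\alpha}}{\Gamma(-\alpha)}\,n^{-\alpha-1}+o(n^{-\alpha-1})\quad\text{as } n\to+\infty,$$ $$\widehat{\varphi_\alpha}(n)=(-1)^n\frac{2^{\alpha}}{\Gamma(-\alpha)}\,(-n)^{-\alpha-1}+o(|n|^{-\alpha-1})\quad\text{as } n\to-\infty .$$
   Context: Powers $z^\alpha$ are taken with the principal branch (the bases $1-Re^{i\theta}$, $1+Re^{-i\theta}$ have positive real part for $R<1$). For an integrable function $h$ on $]-\pi,\pi]$, $\widehat h(s)=\frac1{2\pi}\int_{-\pi}^{\pi}h(\theta)e^{-is\theta}\,d\theta$ for $s\in\mathbb Z$; $\widehat{\varphi_\alpha}(n)$ is also the limit as $R\to1^-$ of $\widehat{\varphi_{\alpha,R}}(n)$. *)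

theory Defs
  imports "HOL-Analysis.Analysis" "HOL-Library.Landau_Symbols"
begin

text \<open>phi_{alpha,R}(theta) = (1 - R e^{i theta})^alpha (1 + R e^{-i theta})^alpha, principal branch
  (Isabelle's complex powr is exp (a * Ln z) with the principal logarithm).\<close>
definition phiR :: "real \<Rightarrow> real \<Rightarrow> real \<Rightarrow> complex" where
  "phiR \<alpha> R \<theta> = (1 - of_real R * cis \<theta>) powr (of_real \<alpha>) * (1 + of_real R * cis (-\<theta>)) powr (of_real \<alpha>)"

definition phi :: "real \<Rightarrow> real \<Rightarrow> complex" where
  "phi \<alpha> \<theta> = Lim (at_left 1) (\<lambda>R. phiR \<alpha> R \<theta>)"

definition fourier_coeff :: "(real \<Rightarrow> complex) \<Rightarrow> int \<Rightarrow> complex" where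
  "fourier_coeff h s = integral {-pi..pi} (\<lambda>\<theta>. h \<theta> * exp (- \<i> * of_int s * of_real \<theta>)) / of_real (2 * pi)"

end

theory Submission
  imports Defs
begin

definition acoef :: "real \<Rightarrow> nat \<Rightarrow> real" where
  "acoef \<alpha> k = pochhammer (-\<alpha>) k / fact k"

definition bcoef :: "real \<Rightarrow> nat \<Rightarrow> real" where
  "bcoef \<alpha> k = (-1)^k * acoef \<alpha> k"

lemma acoef_0 [simp]: "acoef \<alpha> 0 = 1" by (simp add: acoef_def)

lemma acoef_Suc: "acoef \<alpha> (Suc m) = acoef \<alpha> m * ((real m - \<alpha>) / (real m + 1))"
  by (simp add: acoef_def pochhammer_Suc field_simps)

lemma bcoef_gchoose: "bcoef \<alpha> k = \<alpha> gchoose k"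
  by (simp add: bcoef_def acoef_def gbinomial_pochhammer)

lemma acoef_nz: assumes "\<alpha> \<notin> \<int>" shows "acoef \<alpha> m \<noteq> 0"
proof
  assume "acoef \<alpha> m = 0"
  then obtain k where "-\<alpha> = - of_nat k" by (auto simp: acoef_def pochhammer_eq_0_iff)
  hence "\<alpha> = of_nat k" by simp
  with assms show False by simp
qed

lemma acoef_asymp:
  "(\<lambda>n. acoef \<alpha> n * real n powr (\<alpha> + 1)) \<longlonglongrightarrow> rGamma (-\<alpha>)"
proof -
  have lim: "(\<lambda>n. rGamma_series (-\<alpha>) n * (real n / (real n - \<alpha>))) \<longlonglongrightarrow> rGamma (-\<alpha>) * 1"
    by (intro tendsto_intros rGamma_series_LIMSEQ) real_asymp
  have ev: "eventually (\<lambda>n. rGamma_series (-\<alpha>) n * (real n / (real n - \<alpha>)) = acoef \<alpha> n * real n powr (\<alpha> + 1)) sequentially"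
    using eventually_gt_at_top[of "nat \<lceil>\<alpha>\<rceil>"]
  proof eventually_elim
    case (elim n)
    hence n: "real n > \<alpha>" "n > 0" by linarith+
    hence "real n - \<alpha> \<noteq> 0" by simp
    have "rGamma_series (-\<alpha>) n = pochhammer (-\<alpha>) n * (real n - \<alpha>) / (fact n * real n powr (-\<alpha>))"
      using n by (simp add: rGamma_series_def pochhammer_Suc powr_def)
    also have "\<dots> = acoef \<alpha> n * (real n - \<alpha>) * real n powr \<alpha>"
      using n by (simp add: acoef_def powr_minus field_simps)
    finally have eq: "rGamma_series (-\<alpha>) n = acoef \<alpha> n * (real n - \<alpha>) * real n powr \<alpha>" .
    have "rGamma_series (-\<alpha>) n * (real n / (real n - \<alpha>)) = acoef \<alpha> n * real n powr \<alpha> * real n"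
      unfolding eq using \<open>real n - \<alpha> \<noteq> 0\<close> by (simp add: divide_simps)
    thus ?case using n by (simp add: powr_add)
  qed
  show ?thesis using Lim_transform_eventually[OF lim ev] by simp
qed

lemma dw_lim:
  fixes v :: "nat \<Rightarrow> real"
  assumes "\<And>j. 0 \<le> v j" "\<And>j. v (Suc j) \<le> v j"
  obtains L where "v \<longlonglongrightarrow> L" "0 \<le> L" "\<And>j. L \<le> v j"
proof -
  have "decseq v" using assms(2) by (simp add: decseq_SucI)
  then obtain L where "v \<longlonglongrightarrow> L" "\<forall>i. L \<le> v i"
    using decseq_convergent[of v 0] assms(1) by blast
  moreover have "0 \<le> L" using \<open>v \<longlonglongrightarrow> L\<close> assms(1) by (intro LIMSEQ_le_const) auto
  ultimately show ?thesis using that by blast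
qed

lemma dsum_summable:
  fixes v E :: "nat \<Rightarrow> real"
  assumes "\<And>j. 0 \<le> v j" "\<And>j. v (Suc j) \<le> v j" "\<And>j. \<bar>E j\<bar> \<le> B"
  shows "summable (\<lambda>j. E j * (v j - v (Suc j)))"
proof -
  obtain L where L: "v \<longlonglongrightarrow> L" using dw_lim[of v, OF assms(1,2)] by blast
  have "summable (\<lambda>j. B * (v j - v (Suc j)))"
    by (intro summable_mult telescope_summable'[OF L])
  moreover have "norm (E j * (v j - v (Suc j))) \<le> B * (v j - v (Suc j))" for j
    using assms(2)[of j] assms(3)[of j] by (simp add: abs_mult mult_right_mono)
  ultimately show ?thesis by (rule summable_comparison_test'[where N=0])
qed

lemma dsum_tail:
  fixes v E :: "nat \<Rightarrow> real"
  assumes "\<And>j. 0 \<le> v j" "\<And>j. v (Suc j) \<le> v j" "\<And>j. \<bar>E j\<bar> \<le> B"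
    and "\<And>j. j \<ge> J \<Longrightarrow> \<bar>E j\<bar> \<le> e" "v J \<le> M" "0 \<le> e"
  shows "\<bar>(\<Sum>j. E j * (v j - v (Suc j))) - (\<Sum>j<J. E j * (v j - v (Suc j)))\<bar> \<le> e * M"
proof -
  define f where "f = (\<lambda>j. E j * (v j - v (Suc j)))"
  have sf: "summable f" unfolding f_def by (rule dsum_summable[of v E B, OF assms(1-3)])
  obtain L where L: "v \<longlonglongrightarrow> L" "0 \<le> L" using dw_lim[of v, OF assms(1,2)] by blast
  have LJ: "(\<lambda>n. v (n + J)) \<longlonglongrightarrow> L" using L(1) by (rule LIMSEQ_ignore_initial_segment)
  have ts: "(\<lambda>n. e * (v (n + J) - v (Suc (n + J)))) sums (e * (v J - L))"
    using sums_mult[OF telescope_sums'[OF LJ], of e] by simp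
  have sft: "summable (\<lambda>n. f (n + J))" using sf by (rule summable_ignore_initial_segment)
  have bnd: "\<bar>f (n + J)\<bar> \<le> e * (v (n + J) - v (Suc (n + J)))" for n
    unfolding f_def using assms(2)[of "n+J"] assms(4)[of "n+J"]
    by (simp add: abs_mult mult_right_mono)
  have sabs: "summable (\<lambda>n. \<bar>f (n + J)\<bar>)"
    by (rule summable_comparison_test'[OF sums_summable[OF ts], where N=0]) (use bnd in auto)
  have "\<bar>(\<Sum>n. f (n + J))\<bar> \<le> (\<Sum>n. \<bar>f (n + J)\<bar>)" by (rule summable_rabs[OF sabs])
  also have "\<dots> \<le> (\<Sum>n. e * (v (n + J) - v (Suc (n + J))))"
    by (rule suminf_le[OF bnd sabs sums_summable[OF ts]])
  also have "\<dots> = e * (v J - L)" using ts by (simp add: sums_iff)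
  also have "\<dots> \<le> e * M" using assms(5,6) L(2) by (simp add: mult_left_mono)
  finally show ?thesis using suminf_split_initial_segment[OF sf, of J] unfolding f_def by simp
qed

lemma dsum_cont:
  fixes E :: "nat \<Rightarrow> real" and w :: "'a \<Rightarrow> nat \<Rightarrow> real"
  assumes E: "E \<longlonglongrightarrow> 0"
    and ev: "eventually (\<lambda>t. (\<forall>j. 0 \<le> w t j \<and> w t (Suc j) \<le> w t j) \<and> w t 0 \<le> M) F"
    and lim: "\<And>j. ((\<lambda>t. w t j) \<longlongrightarrow> W j) F"
    and W: "\<And>j. 0 \<le> W j" "\<And>j. W (Suc j) \<le> W j" "W 0 \<le> M"
  shows "((\<lambda>t. \<Sum>j. E j * (w t j - w t (Suc j))) \<longlongrightarrow> (\<Sum>j. E j * (W j - W (Suc j)))) F"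
proof (rule tendstoI)
  fix \<epsilon> :: real assume \<epsilon>: "\<epsilon> > 0"
  obtain B where B: "\<And>j. \<bar>E j\<bar> \<le> B"
    using convergent_imp_Bseq[of E] E unfolding Bseq_def convergent_def by force
  define e where "e = \<epsilon> / (4 * (\<bar>M\<bar> + 1))"
  have e: "e > 0" using \<epsilon> by (simp add: e_def)
  have M0: "0 \<le> M" using W(1)[of 0] W(3) by simp
  have eM: "e * M \<le> \<epsilon> / 4" using M0 \<epsilon> by (simp add: e_def field_simps)
  obtain J where J: "\<And>j. j \<ge> J \<Longrightarrow> \<bar>E j\<bar> \<le> e"
    using E e unfolding LIMSEQ_def by (force simp: dist_real_def)
  have Wd: "decseq W" using W(2) by (simp add: decseq_SucI)
  have WJ: "W J \<le> M" using decseqD[OF Wd, of 0 J] W(3) by simp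
  have finlim: "((\<lambda>t. \<Sum>j<J. E j * (w t j - w t (Suc j))) \<longlongrightarrow> (\<Sum>j<J. E j * (W j - W (Suc j)))) F"
    by (intro tendsto_intros lim)
  have "eventually (\<lambda>t. dist (\<Sum>j<J. E j * (w t j - w t (Suc j))) (\<Sum>j<J. E j * (W j - W (Suc j))) < \<epsilon>/2) F"
    using tendstoD[OF finlim, of "\<epsilon>/2"] \<epsilon> by simp
  with ev show "eventually (\<lambda>t. dist (\<Sum>j. E j * (w t j - w t (Suc j))) (\<Sum>j. E j * (W j - W (Suc j))) < \<epsilon>) F"
  proof eventually_elim
    case (elim t)
    have wd: "decseq (w t)" using elim(1) by (simp add: decseq_SucI)
    have wJ: "w t J \<le> M" using decseqD[OF wd, of 0 J] elim(1) by simp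
    have t1: "\<bar>(\<Sum>j. E j * (w t j - w t (Suc j))) - (\<Sum>j<J. E j * (w t j - w t (Suc j)))\<bar> \<le> e * M"
      by (rule dsum_tail[of "w t" E B J e M, OF _ _ B J wJ]) (use elim(1) e in auto)
    have t2: "\<bar>(\<Sum>j. E j * (W j - W (Suc j))) - (\<Sum>j<J. E j * (W j - W (Suc j)))\<bar> \<le> e * M"
      by (rule dsum_tail[of W E B J e M, OF W(1,2) B J WJ]) (use e in auto)
    have aux: "\<bar>a - a'\<bar> < \<epsilon>" if "\<bar>a - b\<bar> \<le> c" "\<bar>a' - b'\<bar> \<le> c" "\<bar>b - b'\<bar> < \<epsilon>/2" "c \<le> \<epsilon>/4"
      for a b a' b' c :: real using that by linarith
    show ?case unfolding dist_real_def by (rule aux[OF t1 t2 _ eM]) (use elim(2) in \<open>simp add: dist_real_def\<close>)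
  qed
qed

lemma sbp_partial:
  fixes x w :: "nat \<Rightarrow> real"
  shows "(\<Sum>j<N. x j * w j) = (\<Sum>i<N. x i) * w N + S * (w 0 - w N)
           + (\<Sum>j<N. ((\<Sum>i<Suc j. x i) - S) * (w j - w (Suc j)))"
proof (induction N)
  case (Suc N)
  let ?X = "\<Sum>i<N. x i"
  have "(\<Sum>j<Suc N. x j * w j) = (\<Sum>j<N. x j * w j) + x N * w N" by simp
  also have "\<dots> = ?X * w N + S * (w 0 - w N)
           + (\<Sum>j<N. ((\<Sum>i<Suc j. x i) - S) * (w j - w (Suc j))) + x N * w N" using Suc by simp
  also have "\<dots> = (?X + x N) * w (Suc N) + S * (w 0 - w (Suc N))
           + ((\<Sum>j<N. ((\<Sum>i<Suc j. x i) - S) * (w j - w (Suc j))) + ((?X + x N) - S) * (w N - w (Suc N)))"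
    by (simp add: algebra_simps)
  finally show ?case by simp
qed simp

lemma sbp_sums:
  fixes x w :: "nat \<Rightarrow> real"
  assumes x: "x sums S" and w: "\<And>j. 0 \<le> w j" "\<And>j. w (Suc j) \<le> w j" "w \<longlonglongrightarrow> 0"
  shows "(\<lambda>j. x j * w j) sums (S * w 0 + (\<Sum>j. ((\<Sum>i<Suc j. x i) - S) * (w j - w (Suc j))))"
proof -
  define E where "E = (\<lambda>j. (\<Sum>i<Suc j. x i) - S)"
  have X: "(\<lambda>N. \<Sum>i<N. x i) \<longlonglongrightarrow> S" using x by (simp add: sums_def)
  have E0: "E \<longlonglongrightarrow> 0" unfolding E_def
    using LIMSEQ_Suc[OF X] by (simp add: LIM_zero)
  obtain B where B: "\<And>j. \<bar>E j\<bar> \<le> B"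
    using convergent_imp_Bseq[of E] E0 unfolding Bseq_def convergent_def by force
  have sE: "summable (\<lambda>j. E j * (w j - w (Suc j)))" by (rule dsum_summable[of w E B, OF w(1,2) B])
  have "(\<lambda>N. (\<Sum>i<N. x i) * w N + S * (w 0 - w N) + (\<Sum>j<N. E j * (w j - w (Suc j))))
          \<longlonglongrightarrow> S * 0 + S * (w 0 - 0) + (\<Sum>j. E j * (w j - w (Suc j)))"
    by (intro tendsto_intros X w(3) summable_LIMSEQ sE)
  moreover have "(\<lambda>N. \<Sum>j<N. x j * w j) = (\<lambda>N. (\<Sum>i<N. x i) * w N + S * (w 0 - w N) + (\<Sum>j<N. E j * (w j - w (Suc j))))"
    unfolding E_def by (rule ext) (rule sbp_partial)
  ultimately have "(\<lambda>N. \<Sum>j<N. x j * w j) \<longlonglongrightarrow> S * w 0 + (\<Sum>j. E j * (w j - w (Suc j)))"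
    by simp
  thus ?thesis by (simp add: sums_def E_def)
qed

definition N0 :: "real \<Rightarrow> nat" where "N0 \<alpha> = nat \<lfloor>\<alpha>\<rfloor> + 1"

lemma N0_gt: "real m \<ge> real (N0 \<alpha>) \<Longrightarrow> real m > \<alpha>"
  unfolding N0_def by linarith

lemma acoef_tendsto0:
  assumes "\<alpha> > -1"
  shows "acoef \<alpha> \<longlonglongrightarrow> 0"
proof -
  have "(\<lambda>n. (acoef \<alpha> n * real n powr (\<alpha> + 1)) * real n powr (-(\<alpha>+1))) \<longlonglongrightarrow> rGamma (-\<alpha>) * 0"
    using assms by (intro tendsto_intros acoef_asymp tendsto_neg_powr filterlim_real_sequentially) auto
  moreover have "eventually (\<lambda>n. (acoef \<alpha> n * real n powr (\<alpha> + 1)) * real n powr (-(\<alpha>+1)) = acoef \<alpha> n) sequentially"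
    using eventually_gt_at_top[of 0]
    by eventually_elim (simp add: powr_add[symmetric])
  ultimately show ?thesis using Lim_transform_eventually by fastforce
qed

lemma ev01: "eventually (\<lambda>R::real. 0 < R \<and> R < 1) (at_left 1)"
  using eventually_at_left_real[where a="1::real" and b=0] by simp

lemma acoef_step:
  assumes "real m > \<alpha>" "\<alpha> > -1"
  shows "\<bar>acoef \<alpha> (Suc m)\<bar> \<le> \<bar>acoef \<alpha> m\<bar>" "sgn (acoef \<alpha> (Suc m)) = sgn (acoef \<alpha> m)"
proof -
  have q: "0 < (real m - \<alpha>) / (real m + 1)" "(real m - \<alpha>) / (real m + 1) \<le> 1"
    using assms by (auto simp: field_simps)
  have "\<bar>acoef \<alpha> (Suc m)\<bar> = \<bar>acoef \<alpha> m\<bar> * ((real m - \<alpha>) / (real m + 1))"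
    using q assms(1) by (simp add: acoef_Suc abs_mult)
  also have "\<dots> \<le> \<bar>acoef \<alpha> m\<bar>" by (rule mult_left_le) (use q in auto)
  finally show "\<bar>acoef \<alpha> (Suc m)\<bar> \<le> \<bar>acoef \<alpha> m\<bar>" .
  show "sgn (acoef \<alpha> (Suc m)) = sgn (acoef \<alpha> m)"
    using q assms(1) by (simp add: acoef_Suc sgn_mult)
qed

lemma acoef_sgn:
  assumes "m \<ge> N0 \<alpha>" "\<alpha> > -1"
  shows "sgn (acoef \<alpha> m) = sgn (acoef \<alpha> (N0 \<alpha>))"
  using assms
proof (induction m rule: dec_induct)
  case (step m)
  have "real m > \<alpha>" using step(1) by (intro N0_gt) simp
  then show ?case using acoef_step(2)[where m=m and \<alpha>=\<alpha>] step(3) step(4) by simp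
qed simp

lemma bcoef_summable:
  assumes "\<alpha> > -1" "\<alpha> \<notin> \<int>"
  shows "summable (bcoef \<alpha>)"
proof -
  define N where "N = N0 \<alpha>"
  define \<sigma> where "\<sigma> = sgn (acoef \<alpha> N)"
  define c where "c = (\<lambda>k. \<bar>acoef \<alpha> (k + N)\<bar>)"
  have c0: "c \<longlonglongrightarrow> 0" unfolding c_def
    using tendsto_rabs[OF LIMSEQ_ignore_initial_segment[OF acoef_tendsto0[OF assms(1)], of N]] by simp
  have cmono: "c (Suc k) \<le> c k" for k
  proof -
    have "real (k + N) > \<alpha>" by (intro N0_gt) (simp add: N_def)
    thus ?thesis unfolding c_def using acoef_step(1)[where m="k+N" and \<alpha>=\<alpha>] assms(1) by simp
  qed
  have "summable (\<lambda>k. (-1)^k * c k)"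
    by (rule summable_Leibniz'(1)[OF c0]) (use cmono in \<open>auto simp: c_def\<close>)
  hence "summable (\<lambda>k. ((-1)^N * \<sigma>) * ((-1)^k * c k))" by (rule summable_mult)
  moreover have "((-1)^N * \<sigma>) * ((-1)^k * c k) = bcoef \<alpha> (k + N)" for k
  proof -
    have "sgn (acoef \<alpha> (k+N)) = \<sigma>" unfolding \<sigma>_def N_def by (rule acoef_sgn) (use assms in simp_all)
    hence "acoef \<alpha> (k+N) = \<sigma> * c k" unfolding c_def by (metis abs_mult_sgn mult.commute)
    thus ?thesis by (simp add: bcoef_def power_add)
  qed
  ultimately have "summable (\<lambda>k. bcoef \<alpha> (k + N))" by simp
  thus ?thesis by simp
qed

definition Ebin :: "real \<Rightarrow> nat \<Rightarrow> real" where
  "Ebin \<alpha> j = (\<Sum>i<Suc j. bcoef \<alpha> i) - 2 powr \<alpha>"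

lemma bcoef_sums:
  assumes "\<alpha> > -1" "\<alpha> \<notin> \<int>"
  shows "bcoef \<alpha> sums (2 powr \<alpha>)"
proof -
  obtain S where S: "bcoef \<alpha> sums S" using bcoef_summable[OF assms] by (auto simp: summable_def)
  define E where "E = (\<lambda>j. (\<Sum>i<Suc j. bcoef \<alpha> i) - S)"
  have E0: "E \<longlonglongrightarrow> 0" unfolding E_def
    using LIMSEQ_Suc[OF S[unfolded sums_def]] by (simp add: LIM_zero)
  have eq: "eventually (\<lambda>R. S * 1 + (\<Sum>j. E j * (R^j - R^(Suc j))) = (1 + R) powr \<alpha>) (at_left 1)"
    using ev01
  proof eventually_elim
    case (elim R)
    hence R: "0 < R" "R < 1" by auto
    have "(\<lambda>j. bcoef \<alpha> j * R^j) sums (1 + R) powr \<alpha>"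
      using gen_binomial_real[of R \<alpha>] R by (simp add: bcoef_gchoose)
    moreover have "(\<lambda>j. bcoef \<alpha> j * R^j) sums (S * R^0 + (\<Sum>j. E j * (R^j - R^(Suc j))))"
      unfolding E_def
    proof (rule sbp_sums[OF S])
      show "0 \<le> R ^ j" "R ^ Suc j \<le> R ^ j" for j using R by (auto simp: mult_left_le_one_le)
      show "(\<lambda>j. R ^ j) \<longlonglongrightarrow> 0" using R by (intro LIMSEQ_power_zero) simp
    qed
    ultimately show ?case by (simp add: sums_iff)
  qed
  have "((\<lambda>R. \<Sum>j. E j * (R^j - R^(Suc j))) \<longlongrightarrow> (\<Sum>j. E j * (1^j - 1^(Suc j)))) (at_left (1::real))"
  proof (rule dsum_cont[OF E0, where M=1])
    show "\<forall>\<^sub>F t in at_left 1. (\<forall>j. 0 \<le> t ^ j \<and> t ^ Suc j \<le> t ^ j) \<and> t ^ 0 \<le> (1::real)"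
      using ev01
      by eventually_elim (auto simp: mult_left_le_one_le)
    show "((\<lambda>t. t ^ j) \<longlongrightarrow> 1 ^ j) (at_left (1::real))" for j
      by (intro tendsto_intros)
  qed auto
  hence "((\<lambda>R. S * 1 + (\<Sum>j. E j * (R^j - R^(Suc j)))) \<longlongrightarrow> S * 1 + 0) (at_left (1::real))"
    by (intro tendsto_add tendsto_const) simp
  hence "((\<lambda>R. (1 + R) powr \<alpha>) \<longlongrightarrow> S * 1 + 0) (at_left (1::real))"
    by (rule Lim_transform_eventually[OF _ eq])
  hence "((\<lambda>R. (1 + R) powr \<alpha>) \<longlongrightarrow> S) (at_left (1::real))" by simp
  moreover have "((\<lambda>R. (1 + R) powr \<alpha>) \<longlongrightarrow> (1 + 1) powr \<alpha>) (at_left (1::real))"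
    by (rule tendsto_powr tendsto_add tendsto_const tendsto_ident_at)+ simp
  ultimately have "S = 2 powr \<alpha>" using tendsto_unique[OF trivial_limit_at_left_real] by force
  thus ?thesis using S by simp
qed

lemma Ebin_tendsto:
  assumes "\<alpha> > -1" "\<alpha> \<notin> \<int>"
  shows "Ebin \<alpha> \<longlonglongrightarrow> 0"
  unfolding Ebin_def
  using LIMSEQ_Suc[OF bcoef_sums[OF assms, unfolded sums_def]] by (simp add: LIM_zero)

definition rw :: "real \<Rightarrow> nat \<Rightarrow> nat \<Rightarrow> real" where
  "rw \<alpha> n j = acoef \<alpha> (n + j) / acoef \<alpha> n"

definition rho :: "real \<Rightarrow> nat \<Rightarrow> real" where
  "rho \<alpha> n = 2 powr \<alpha> + (\<Sum>j. Ebin \<alpha> j * (rw \<alpha> n j - rw \<alpha> n (Suc j)))"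

lemma rw_0: "\<alpha> \<notin> \<int> \<Longrightarrow> rw \<alpha> n 0 = 1"
  using acoef_nz[of \<alpha> n] by (simp add: rw_def)

lemma rw_Suc: "rw \<alpha> n (Suc j) = rw \<alpha> n j * ((real (n + j) - \<alpha>) / (real (n + j) + 1))"
  by (simp add: rw_def acoef_Suc)

lemma rw_props:
  assumes "\<alpha> > -1" "\<alpha> \<notin> \<int>" "n \<ge> N0 \<alpha>"
  shows "0 \<le> rw \<alpha> n j" "rw \<alpha> n (Suc j) \<le> rw \<alpha> n j"
proof -
  have q: "0 < (real (n + j) - \<alpha>) / (real (n + j) + 1)" "(real (n + j) - \<alpha>) / (real (n + j) + 1) \<le> 1"
    for j
  proof -
    have "real (n + j) > \<alpha>" by (rule N0_gt) (use assms(3) in simp)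
    thus "0 < (real (n + j) - \<alpha>) / (real (n + j) + 1)" "(real (n + j) - \<alpha>) / (real (n + j) + 1) \<le> 1"
      using assms(1) by (auto simp: field_simps)
  qed
  have nn: "0 \<le> rw \<alpha> n j" for j
  proof (induction j)
    case 0 thus ?case using rw_0[OF assms(2)] by simp
  next
    case (Suc j) show ?case unfolding rw_Suc by (rule mult_nonneg_nonneg[OF Suc less_imp_le[OF q(1)]])
  qed
  show "0 \<le> rw \<alpha> n j" by (rule nn)
  show "rw \<alpha> n (Suc j) \<le> rw \<alpha> n j"
    unfolding rw_Suc by (rule mult_left_le) (use q[of j] nn[of j] in auto)
qed

lemma rw_tendsto0:
  assumes "\<alpha> > -1"
  shows "(\<lambda>j. rw \<alpha> n j) \<longlonglongrightarrow> 0"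
proof -
  have "(\<lambda>j. acoef \<alpha> (j + n) / acoef \<alpha> n) \<longlonglongrightarrow> 0"
    by (rule tendsto_divide_zero[OF LIMSEQ_ignore_initial_segment[OF acoef_tendsto0[OF assms], of n]])
  thus ?thesis by (simp add: rw_def add.commute)
qed

lemma rw_lim1:
  assumes "\<alpha> \<notin> \<int>"
  shows "(\<lambda>n. rw \<alpha> n j) \<longlonglongrightarrow> 1"
proof (induction j)
  case 0 thus ?case using rw_0[OF assms] by simp
next
  case (Suc j)
  have "(\<lambda>n. (real n + real j - \<alpha>) / (real n + real j + 1)) \<longlonglongrightarrow> 1" by real_asymp
  hence "(\<lambda>n. rw \<alpha> n j * ((real (n + j) - \<alpha>) / (real (n + j) + 1))) \<longlonglongrightarrow> 1 * 1"
    using Suc by (intro tendsto_mult) simp_all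
  thus ?case by (simp add: rw_Suc)
qed

lemma rho_tendsto:
  assumes "\<alpha> > -1" "\<alpha> \<notin> \<int>"
  shows "rho \<alpha> \<longlonglongrightarrow> 2 powr \<alpha>"
proof -
  have "(\<lambda>n. \<Sum>j. Ebin \<alpha> j * (rw \<alpha> n j - rw \<alpha> n (Suc j))) \<longlonglongrightarrow> (\<Sum>j. Ebin \<alpha> j * (1 - 1))"
  proof (rule dsum_cont[OF Ebin_tendsto[OF assms], where M=1 and W="\<lambda>_. 1"])
    show "\<forall>\<^sub>F n in sequentially. (\<forall>j. 0 \<le> rw \<alpha> n j \<and> rw \<alpha> n (Suc j) \<le> rw \<alpha> n j) \<and> rw \<alpha> n 0 \<le> 1"
      using eventually_ge_at_top[of "N0 \<alpha>"]
      by eventually_elim (use rw_props[OF assms] rw_0[OF assms(2)] in auto)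
    show "(\<lambda>n. rw \<alpha> n j) \<longlonglongrightarrow> 1" for j by (rule rw_lim1[OF assms(2)])
  qed auto
  hence "(\<lambda>n. 2 powr \<alpha> + (\<Sum>j. Ebin \<alpha> j * (rw \<alpha> n j - rw \<alpha> n (Suc j)))) \<longlonglongrightarrow> 2 powr \<alpha> + 0"
    by (intro tendsto_add tendsto_const) simp
  thus ?thesis by (simp add: rho_def[abs_def])
qed

lemma T_sums:
  assumes "\<alpha> > -1" "\<alpha> \<notin> \<int>" "n \<ge> N0 \<alpha>" "0 \<le> R" "R < 1"
  shows "(\<lambda>j. bcoef \<alpha> j * acoef \<alpha> (n + j) * R ^ (n + 2 * j)) sums
           (acoef \<alpha> n * R ^ n * (2 powr \<alpha> + (\<Sum>j. Ebin \<alpha> j * (rw \<alpha> n j * (R*R)^j - rw \<alpha> n (Suc j) * (R*R)^(Suc j)))))"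
proof -
  define w where "w = (\<lambda>j. rw \<alpha> n j * (R*R)^j)"
  have RR0: "R * R \<le> R" using assms(4,5) by (simp add: mult_left_le_one_le)
  have RR: "0 \<le> R * R" "R * R \<le> 1" "R * R < 1" using assms(4,5) RR0 by auto
  have "(\<lambda>j. bcoef \<alpha> j * w j) sums (2 powr \<alpha> * w 0 + (\<Sum>j. ((\<Sum>i<Suc j. bcoef \<alpha> i) - 2 powr \<alpha>) * (w j - w (Suc j))))"
  proof (rule sbp_sums[OF bcoef_sums[OF assms(1,2)]])
    show "0 \<le> w j" for j unfolding w_def using rw_props[OF assms(1-3)] RR by simp
    show "w (Suc j) \<le> w j" for j unfolding w_def
      using rw_props[OF assms(1-3), of j] RR
      by (auto intro!: mult_mono simp: mult_left_le_one_le)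
    show "w \<longlonglongrightarrow> 0" unfolding w_def
      using tendsto_mult[OF rw_tendsto0[OF assms(1), of n] LIMSEQ_power_zero[of "R*R"]] RR by simp
  qed
  hence S1: "(\<lambda>j. (acoef \<alpha> n * R ^ n) * (bcoef \<alpha> j * w j)) sums
           ((acoef \<alpha> n * R ^ n) * (2 powr \<alpha> + (\<Sum>j. Ebin \<alpha> j * (w j - w (Suc j)))))"
    using rw_0[OF assms(2)] by (intro sums_mult) (simp add: w_def Ebin_def)
  have eqf: "(\<lambda>j. (acoef \<alpha> n * R ^ n) * (bcoef \<alpha> j * w j)) = (\<lambda>j. bcoef \<alpha> j * acoef \<alpha> (n + j) * R ^ (n + 2 * j))"
  proof (rule ext)
    fix j
    have "R ^ (n + 2 * j) = R ^ n * (R * R) ^ j" by (simp add: power_add power_mult power2_eq_square)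
    thus "(acoef \<alpha> n * R ^ n) * (bcoef \<alpha> j * w j) = bcoef \<alpha> j * acoef \<alpha> (n + j) * R ^ (n + 2 * j)"
      using acoef_nz[OF assms(2), of n] by (simp add: w_def rw_def)
  qed
  show ?thesis using S1[unfolded eqf] unfolding w_def .
qed

lemma T_lim:
  assumes "\<alpha> > -1" "\<alpha> \<notin> \<int>" "n \<ge> N0 \<alpha>"
  shows "((\<lambda>R. \<Sum>j. bcoef \<alpha> j * acoef \<alpha> (n + j) * R ^ (n + 2 * j)) \<longlongrightarrow> acoef \<alpha> n * rho \<alpha> n) (at_left 1)"
proof -
  have lim: "((\<lambda>R. \<Sum>j. Ebin \<alpha> j * (rw \<alpha> n j * (R*R)^j - rw \<alpha> n (Suc j) * (R*R)^(Suc j)))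
              \<longlongrightarrow> (\<Sum>j. Ebin \<alpha> j * (rw \<alpha> n j - rw \<alpha> n (Suc j)))) (at_left 1)"
  proof (rule dsum_cont[OF Ebin_tendsto[OF assms(1,2)], where M=1 and W="rw \<alpha> n"])
    show "\<forall>\<^sub>F R in at_left 1. (\<forall>j. 0 \<le> rw \<alpha> n j * (R*R)^j \<and> rw \<alpha> n (Suc j) * (R*R)^(Suc j) \<le> rw \<alpha> n j * (R*R)^j)
            \<and> rw \<alpha> n 0 * (R*R)^0 \<le> (1::real)"
      using ev01
    proof eventually_elim
      case (elim R)
      have RR: "0 \<le> R * R" "R * R \<le> 1" using elim by (auto simp: mult_le_one)
      show ?case
        using rw_props[OF assms] RR rw_0[OF assms(2)]
        by (auto intro!: mult_mono simp: mult_left_le_one_le)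
    qed
    show "((\<lambda>R. rw \<alpha> n j * (R*R)^j) \<longlongrightarrow> rw \<alpha> n j) (at_left 1)" for j
    proof -
      have id1: "((\<lambda>R::real. R) \<longlongrightarrow> 1) (at_left 1)" by (simp add: tendsto_ident_at)
      show ?thesis using tendsto_mult[OF tendsto_const[of "rw \<alpha> n j"] tendsto_power[OF tendsto_mult[OF id1 id1], of j]]
        by simp
    qed
  qed (use rw_props[OF assms] rw_0[OF assms(2)] in auto)
  have "((\<lambda>R. acoef \<alpha> n * R ^ n * (2 powr \<alpha> + (\<Sum>j. Ebin \<alpha> j * (rw \<alpha> n j * (R*R)^j - rw \<alpha> n (Suc j) * (R*R)^(Suc j)))))
          \<longlongrightarrow> acoef \<alpha> n * 1 ^ n * (2 powr \<alpha> + (\<Sum>j. Ebin \<alpha> j * (rw \<alpha> n j - rw \<alpha> n (Suc j))))) (at_left 1)"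
    by (intro tendsto_mult tendsto_add tendsto_const tendsto_power tendsto_ident_at lim)
  hence L: "((\<lambda>R. acoef \<alpha> n * R ^ n * (2 powr \<alpha> + (\<Sum>j. Ebin \<alpha> j * (rw \<alpha> n j * (R*R)^j - rw \<alpha> n (Suc j) * (R*R)^(Suc j)))))
          \<longlongrightarrow> acoef \<alpha> n * rho \<alpha> n) (at_left 1)" by (simp add: rho_def)
  have "eventually (\<lambda>R. acoef \<alpha> n * R ^ n * (2 powr \<alpha> + (\<Sum>j. Ebin \<alpha> j * (rw \<alpha> n j * (R*R)^j - rw \<alpha> n (Suc j) * (R*R)^(Suc j))))
          = (\<Sum>j. bcoef \<alpha> j * acoef \<alpha> (n + j) * R ^ (n + 2 * j))) (at_left 1)"
    using ev01 by eventually_elim (use T_sums[OF assms] in \<open>auto simp: sums_iff\<close>)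
  thus ?thesis by (rule Lim_transform_eventually[OF L])
qed

lemma cis_int_integral:
  fixes m :: int
  shows "((\<lambda>\<theta>. cis (of_int m * \<theta>)) has_integral (if m = 0 then of_real (2 * pi) else 0)) {-pi..pi}"
proof -
  have "((\<lambda>\<theta>. of_real (cos (of_int m * \<theta>)) + \<i> * of_real (sin (of_int m * \<theta>)) :: complex) has_integral
          (of_real (if m = 0 then 2 * pi else 0) + \<i> * of_real 0)) {-pi..pi}"
    by (intro has_integral_add has_integral_mult_right has_integral_of_real has_integral_cos_nx has_integral_sin_nx)
  moreover have "(\<lambda>\<theta>. of_real (cos (of_int m * \<theta>)) + \<i> * of_real (sin (of_int m * \<theta>)) :: complex) = (\<lambda>\<theta>. cis (of_int m * \<theta>))"
    by (rule ext) (simp add: complex_eq_iff)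
  ultimately show ?thesis by (simp split: if_splits)
qed

lemma termwise_integral:
  fixes c :: "nat \<Rightarrow> complex" and h :: "real \<Rightarrow> complex" and s :: real
  assumes c: "summable (\<lambda>k. norm (c k))" and h: "continuous_on {-pi..pi} h"
  shows "(\<lambda>k. c k * integral {-pi..pi} (\<lambda>\<theta>. h \<theta> * cis (real k * s * \<theta>))) sums
           integral {-pi..pi} (\<lambda>\<theta>. h \<theta> * (\<Sum>k. c k * cis (real k * s * \<theta>)))"
proof -
  have u1: "uniform_limit {-pi..pi} (\<lambda>N \<theta>. \<Sum>k<N. c k * cis (real k * s * \<theta>))
              (\<lambda>\<theta>. \<Sum>k. c k * cis (real k * s * \<theta>)) sequentially"
    by (rule Weierstrass_m_test[OF _ c]) (simp add: norm_mult)
  have hb: "bounded (h ` {-pi..pi})" by (intro compact_imp_bounded compact_continuous_image h) simp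
  have sb: "bounded ((\<lambda>\<theta>. \<Sum>k. c k * cis (real k * s * \<theta>)) ` {-pi..pi})"
  proof -
    have "norm (\<Sum>k. c k * cis (real k * s * \<theta>)) \<le> (\<Sum>k. norm (c k))" for \<theta>
    proof -
      have "summable (\<lambda>k. norm (c k * cis (real k * s * \<theta>)))" using c by (simp add: norm_mult)
      hence "norm (\<Sum>k. c k * cis (real k * s * \<theta>)) \<le> (\<Sum>k. norm (c k * cis (real k * s * \<theta>)))"
        by (rule summable_norm)
      thus ?thesis by (simp add: norm_mult)
    qed
    thus ?thesis unfolding bounded_iff by blast
  qed
  have u2: "uniform_limit {-pi..pi} (\<lambda>N \<theta>. h \<theta> * (\<Sum>k<N. c k * cis (real k * s * \<theta>)))
              (\<lambda>\<theta>. h \<theta> * (\<Sum>k. c k * cis (real k * s * \<theta>))) sequentially"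
    by (rule uniform_lim_mult[OF uniform_limit_const u1 hb sb])
  have cont: "continuous_on {-pi..pi} (\<lambda>\<theta>. h \<theta> * (\<Sum>k<N. c k * cis (real k * s * \<theta>)))" for N
    by (intro continuous_intros h)
  obtain I J where I: "\<And>N. ((\<lambda>\<theta>. h \<theta> * (\<Sum>k<N. c k * cis (real k * s * \<theta>))) has_integral I N) {-pi..pi}"
    and J: "((\<lambda>\<theta>. h \<theta> * (\<Sum>k. c k * cis (real k * s * \<theta>))) has_integral J) {-pi..pi}"
    and IJ: "I \<longlonglongrightarrow> J"
    by (rule uniform_limit_integral[OF u2 cont]) auto
  have int_k: "(\<lambda>\<theta>. h \<theta> * cis (real k * s * \<theta>)) integrable_on {-pi..pi}" for k
    by (intro integrable_continuous_interval continuous_intros h)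
  have IN: "I N = (\<Sum>k<N. c k * integral {-pi..pi} (\<lambda>\<theta>. h \<theta> * cis (real k * s * \<theta>)))" for N
  proof -
    have "(\<lambda>\<theta>. h \<theta> * (\<Sum>k<N. c k * cis (real k * s * \<theta>))) = (\<lambda>\<theta>. \<Sum>k<N. c k * (h \<theta> * cis (real k * s * \<theta>)))"
      by (rule ext) (simp add: sum_distrib_left mult_ac)
    hence "I N = integral {-pi..pi} (\<lambda>\<theta>. \<Sum>k<N. c k * (h \<theta> * cis (real k * s * \<theta>)))"
      using I[of N] by (simp add: integral_unique)
    also have "\<dots> = (\<Sum>k<N. integral {-pi..pi} (\<lambda>\<theta>. c k * (h \<theta> * cis (real k * s * \<theta>))))"
      by (rule integral_sum) (auto intro: integrable_on_mult_right int_k)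
    also have "\<dots> = (\<Sum>k<N. c k * integral {-pi..pi} (\<lambda>\<theta>. h \<theta> * cis (real k * s * \<theta>)))"
      by (simp add: integral_mult_right)
    finally show ?thesis .
  qed
  have "I = (\<lambda>N. \<Sum>k<N. c k * integral {-pi..pi} (\<lambda>\<theta>. h \<theta> * cis (real k * s * \<theta>)))"
    by (rule ext) (rule IN)
  hence "(\<lambda>N. \<Sum>k<N. c k * integral {-pi..pi} (\<lambda>\<theta>. h \<theta> * cis (real k * s * \<theta>))) \<longlonglongrightarrow> J"
    using IJ by simp
  thus ?thesis using J by (simp add: sums_def integral_unique)
qed

lemma gchoose_complex_of_real: "(complex_of_real a gchoose n) = of_real (a gchoose n)"
  by (simp add: gbinomial_prod_rev)

lemma acoef_bounded:
  assumes "\<alpha> > -1"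
  obtains M where "M > 0" "\<And>k. \<bar>acoef \<alpha> k\<bar> \<le> M"
proof -
  have "Bseq (acoef \<alpha>)" using acoef_tendsto0[OF assms] by (intro convergent_imp_Bseq) (auto simp: convergent_def)
  then obtain K where "K > 0" "\<forall>n. norm (acoef \<alpha> n) \<le> K" unfolding Bseq_def by blast
  thus ?thesis using that[of K] by simp
qed

lemma coef_summable:
  assumes "\<alpha> > -1" "0 \<le> R" "R < 1"
  shows "summable (\<lambda>k. norm (complex_of_real (acoef \<alpha> k * R^k)))"
        "summable (\<lambda>k. norm (complex_of_real (bcoef \<alpha> k * R^k)))"
proof -
  obtain M where M: "M > 0" "\<And>k. \<bar>acoef \<alpha> k\<bar> \<le> M" using acoef_bounded[OF assms(1)] by blast
  have g: "summable (\<lambda>k. M * R^k)" using assms by (intro summable_mult summable_geometric) simp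
  have le0: "\<bar>acoef \<alpha> k * R^k\<bar> \<le> M * R^k" "\<bar>bcoef \<alpha> k * R^k\<bar> \<le> M * R^k" for k
    using M(2)[of k] assms(2) by (auto simp: abs_mult bcoef_def intro!: mult_right_mono)
  have le: "norm (complex_of_real (acoef \<alpha> k * R^k)) \<le> M * R^k"
           "norm (complex_of_real (bcoef \<alpha> k * R^k)) \<le> M * R^k" for k
    unfolding norm_of_real by (rule le0)+
  show "summable (\<lambda>k. norm (complex_of_real (acoef \<alpha> k * R^k)))"
    by (rule summable_comparison_test'[OF g, where N=0]) (use le in simp)
  show "summable (\<lambda>k. norm (complex_of_real (bcoef \<alpha> k * R^k)))"
    by (rule summable_comparison_test'[OF g, where N=0]) (use le in simp)
qed

lemma A_series:
  assumes "0 \<le> R" "R < 1"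
  shows "(\<lambda>k. complex_of_real (acoef \<alpha> k * R^k) * cis (real k * 1 * \<theta>)) sums
           (1 - of_real R * cis \<theta>) powr of_real \<alpha>"
proof -
  have "norm (- (of_real R * cis \<theta>)) < 1" using assms by (simp add: norm_mult)
  from gen_binomial_complex[OF this, of "of_real \<alpha>"]
  have "(\<lambda>k. (complex_of_real \<alpha> gchoose k) * (- (of_real R * cis \<theta>)) ^ k) sums (1 + - (of_real R * cis \<theta>)) powr of_real \<alpha>" .
  moreover have "(complex_of_real \<alpha> gchoose k) * (- (of_real R * cis \<theta>)) ^ k = complex_of_real (acoef \<alpha> k * R^k) * cis (real k * 1 * \<theta>)" for k
  proof -
    have e1: "(complex_of_real \<alpha> gchoose k) = of_real ((-1)^k * acoef \<alpha> k)"
      unfolding gchoose_complex_of_real bcoef_gchoose[symmetric] bcoef_def ..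
    have e2: "(- (of_real R * cis \<theta>)) ^ k = (-1)^k * (of_real R ^ k * cis \<theta> ^ k)"
      unfolding power_minus[of "of_real R * cis \<theta>" k] power_mult_distrib ..
    have "(complex_of_real \<alpha> gchoose k) * (- (of_real R * cis \<theta>)) ^ k
        = ((-1)^k * (-1)^k) * (of_real (acoef \<alpha> k) * (of_real R ^ k * cis \<theta> ^ k))"
      unfolding e1 e2 by (simp only: of_real_mult of_real_power of_real_minus of_real_1 mult_ac)
    also have "\<dots> = of_real (acoef \<alpha> k * R^k) * cis (real k * 1 * \<theta>)"
      unfolding Complex.DeMoivre by simp
    finally show ?thesis .
  qed
  ultimately show ?thesis by simp
qed

lemma B_series:
  assumes "0 \<le> R" "R < 1"
  shows "(\<lambda>k. complex_of_real (bcoef \<alpha> k * R^k) * cis (real k * (-1) * \<theta>)) sums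
           (1 + of_real R * cis (-\<theta>)) powr of_real \<alpha>"
proof -
  have "norm (of_real R * cis (-\<theta>)) < 1" using assms by (simp add: norm_mult)
  from gen_binomial_complex[OF this, of "of_real \<alpha>"]
  have "(\<lambda>k. (complex_of_real \<alpha> gchoose k) * (of_real R * cis (-\<theta>)) ^ k) sums (1 + of_real R * cis (-\<theta>)) powr of_real \<alpha>" .
  moreover have "(complex_of_real \<alpha> gchoose k) * (of_real R * cis (-\<theta>)) ^ k = complex_of_real (bcoef \<alpha> k * R^k) * cis (real k * (-1) * \<theta>)" for k
  proof -
    have "cis (-\<theta>) ^ k = cis (real k * (-1) * \<theta>)" unfolding Complex.DeMoivre by simp
    thus ?thesis by (simp add: gchoose_complex_of_real bcoef_gchoose power_mult_distrib)
  qed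
  ultimately show ?thesis by simp
qed

lemma base_Re:
  assumes "0 \<le> R" "R < 1"
  shows "Re (1 - of_real R * cis \<theta>) > 0" "Re (1 + of_real R * cis (-\<theta>)) > 0"
proof -
  have "R * cos \<theta> \<le> R" using assms(1) by (simp add: mult_left_le)
  have "R * (-1) \<le> R * cos \<theta>" by (rule mult_left_mono) (use assms(1) in auto)
  hence "- R \<le> R * cos \<theta>" by simp
  note this \<open>R * cos \<theta> \<le> R\<close>
  thus "Re (1 - of_real R * cis \<theta>) > 0" "Re (1 + of_real R * cis (-\<theta>)) > 0" using assms by auto
qed

lemma A_cont:
  assumes "0 \<le> R" "R < 1"
  shows "continuous_on S (\<lambda>\<theta>. (1 - of_real R * cis \<theta>) powr complex_of_real \<alpha>)"
proof (intro continuous_on_powr_complex continuous_intros)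
  show "S \<subseteq> {z. 0 \<le> Re (1 - complex_of_real R * cis z) \<or> Im (1 - complex_of_real R * cis z) \<noteq> 0}"
    using base_Re(1)[OF assms] by (auto intro: less_imp_le)
  show "\<And>z. z \<in> S \<Longrightarrow> 1 - complex_of_real R * cis z = 0 \<Longrightarrow> 0 < Re (complex_of_real \<alpha>)"
    using base_Re(1)[OF assms] by (metis less_irrefl zero_complex.sel(1))
qed

lemma exp_cis_int: "exp (- \<i> * of_int m * of_real \<theta>) = cis (of_int (- m) * \<theta>)"
  by (simp add: cis_conv_exp mult.assoc)

lemma inner_integral:
  assumes "\<alpha> > -1" "0 \<le> R" "R < 1"
  shows "integral {-pi..pi} (\<lambda>\<theta>. cis (of_int p * \<theta>) * (1 - of_real R * cis \<theta>) powr complex_of_real \<alpha>)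
          = (if p \<le> 0 then of_real (acoef \<alpha> (nat (-p)) * R ^ nat (-p)) * of_real (2 * pi) else 0)"
proof -
  define a where "a = (\<lambda>k. complex_of_real (acoef \<alpha> k * R^k))"
  have Aeq: "(1 - of_real R * cis \<theta>) powr complex_of_real \<alpha> = (\<Sum>k. a k * cis (real k * 1 * \<theta>))" for \<theta>
    using A_series[OF assms(2,3), of \<alpha> \<theta>] by (simp add: a_def sums_iff)
  have T: "(\<lambda>k. a k * integral {-pi..pi} (\<lambda>\<theta>. cis (of_int p * \<theta>) * cis (real k * 1 * \<theta>))) sums
           integral {-pi..pi} (\<lambda>\<theta>. cis (of_int p * \<theta>) * (\<Sum>k. a k * cis (real k * 1 * \<theta>)))"
    by (rule termwise_integral) (use coef_summable(1)[OF assms] in \<open>auto simp: a_def intro!: continuous_intros\<close>)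
  have I: "integral {-pi..pi} (\<lambda>\<theta>. cis (of_int p * \<theta>) * cis (real k * 1 * \<theta>))
             = (if int k = - p then of_real (2 * pi) else 0)" for k
  proof -
    have "(\<lambda>\<theta>. cis (of_int p * \<theta>) * cis (real k * 1 * \<theta>)) = (\<lambda>\<theta>. cis (of_int (p + int k) * \<theta>))"
      by (rule ext) (simp add: cis_mult algebra_simps)
    thus ?thesis using cis_int_integral[of "p + int k"] by (auto simp: integral_unique)
  qed
  have T': "(\<lambda>k. a k * (if int k = - p then of_real (2 * pi) else 0)) sums
           integral {-pi..pi} (\<lambda>\<theta>. cis (of_int p * \<theta>) * (1 - of_real R * cis \<theta>) powr complex_of_real \<alpha>)"
    using T unfolding I Aeq .
  show ?thesis
  proof (cases "p \<le> 0")
    case True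
    have "(\<lambda>k. if k = nat (-p) then a k * of_real (2 * pi) else 0) sums (a (nat (-p)) * of_real (2 * pi))"
      by (rule sums_single)
    moreover have "(\<lambda>k. a k * (if int k = - p then of_real (2 * pi) else 0)) = (\<lambda>k. if k = nat (-p) then a k * of_real (2 * pi) else 0)"
      using True by (intro ext) auto
    ultimately show ?thesis using T' True by (simp add: sums_iff a_def)
  next
    case False
    have "(\<lambda>k. a k * (if int k = - p then of_real (2 * pi) else 0)) = (\<lambda>k. 0)"
      using False by (intro ext) auto
    thus ?thesis using T' False by (simp add: sums_iff)
  qed
qed

lemma FC_R_sums:
  assumes "\<alpha> > -1" "0 \<le> R" "R < 1"
  shows "(\<lambda>j. complex_of_real (bcoef \<alpha> j * R^j) *
            (if m + int j \<ge> 0 then of_real (acoef \<alpha> (nat (m + int j)) * R ^ nat (m + int j)) * of_real (2 * pi) else 0))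
         sums integral {-pi..pi} (\<lambda>\<theta>. phiR \<alpha> R \<theta> * exp (- \<i> * of_int m * of_real \<theta>))"
proof -
  define c where "c = (\<lambda>j. complex_of_real (bcoef \<alpha> j * R^j))"
  define h where "h = (\<lambda>\<theta>. (1 - of_real R * cis \<theta>) powr complex_of_real \<alpha> * cis (of_int (-m) * \<theta>))"
  have Beq: "(1 + of_real R * cis (-\<theta>)) powr complex_of_real \<alpha> = (\<Sum>k. c k * cis (real k * (-1) * \<theta>))" for \<theta>
    using B_series[OF assms(2,3), of \<alpha> \<theta>] by (simp add: c_def sums_iff)
  have T: "(\<lambda>j. c j * integral {-pi..pi} (\<lambda>\<theta>. h \<theta> * cis (real j * (-1) * \<theta>))) sums
           integral {-pi..pi} (\<lambda>\<theta>. h \<theta> * (\<Sum>k. c k * cis (real k * (-1) * \<theta>)))"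
  proof (rule termwise_integral)
    show "summable (\<lambda>k. norm (c k))" unfolding c_def by (rule coef_summable(2)[OF assms])
    show "continuous_on {-pi..pi} h" unfolding h_def
      by (rule continuous_on_mult[OF A_cont[OF assms(2,3)]]) (intro continuous_intros)
  qed
  have integrand: "(\<lambda>\<theta>. h \<theta> * (\<Sum>k. c k * cis (real k * (-1) * \<theta>))) = (\<lambda>\<theta>. phiR \<alpha> R \<theta> * exp (- \<i> * of_int m * of_real \<theta>))"
    unfolding Beq[symmetric] exp_cis_int by (rule ext) (simp add: h_def phiR_def mult_ac)
  have inner: "integral {-pi..pi} (\<lambda>\<theta>. h \<theta> * cis (real j * (-1) * \<theta>))
      = (if m + int j \<ge> 0 then of_real (acoef \<alpha> (nat (m + int j)) * R ^ nat (m + int j)) * of_real (2 * pi) else 0)" for j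
  proof -
    have "(\<lambda>\<theta>. h \<theta> * cis (real j * (-1) * \<theta>)) = (\<lambda>\<theta>. cis (of_int (- (m + int j)) * \<theta>) * (1 - of_real R * cis \<theta>) powr complex_of_real \<alpha>)"
      by (rule ext) (simp add: h_def mult_ac cis_mult algebra_simps)
    thus ?thesis using inner_integral[OF assms, of "- (m + int j)"] by (simp add: add.commute)
  qed
  show ?thesis using T[unfolded integrand inner] unfolding c_def .
qed

definition TR :: "real \<Rightarrow> real \<Rightarrow> nat \<Rightarrow> real" where
  "TR \<alpha> R n = (\<Sum>j. bcoef \<alpha> j * acoef \<alpha> (n + j) * R ^ (n + 2 * j))"

lemma T_summable:
  assumes "\<alpha> > -1" "0 \<le> R" "R < 1"
  shows "summable (\<lambda>j. bcoef \<alpha> j * acoef \<alpha> (n + j) * R ^ (n + 2 * j))"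
proof -
  obtain M where M: "M > 0" "\<And>k. \<bar>acoef \<alpha> k\<bar> \<le> M" using acoef_bounded[OF assms(1)] by blast
  have g: "summable (\<lambda>j. (M * M) * R^j)" using assms by (intro summable_mult summable_geometric) simp
  have "norm (bcoef \<alpha> j * acoef \<alpha> (n + j) * R ^ (n + 2 * j)) \<le> (M * M) * R^j" for j
  proof -
    have "R ^ (n + 2 * j) \<le> R ^ j" by (rule power_decreasing) (use assms in auto)
    moreover have "\<bar>bcoef \<alpha> j * acoef \<alpha> (n + j)\<bar> \<le> M * M"
      using M by (auto simp: abs_mult bcoef_def intro!: mult_mono)
    ultimately show ?thesis using assms(2)
      by (auto simp: abs_mult intro!: mult_mono)
  qed
  thus ?thesis by (intro summable_comparison_test'[OF g, where N=0]) auto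
qed

lemma FC_pos:
  assumes "\<alpha> > -1" "0 \<le> R" "R < 1"
  shows "fourier_coeff (phiR \<alpha> R) (int n) = of_real (TR \<alpha> R n)"
proof -
  have S: "(\<lambda>j. complex_of_real (bcoef \<alpha> j * R^j) *
            (if int n + int j \<ge> 0 then of_real (acoef \<alpha> (nat (int n + int j)) * R ^ nat (int n + int j)) * of_real (2 * pi) else 0))
         sums integral {-pi..pi} (\<lambda>\<theta>. phiR \<alpha> R \<theta> * exp (- \<i> * of_int (int n) * of_real \<theta>))"
    by (rule FC_R_sums[OF assms])
  have eq: "(\<lambda>j. complex_of_real (bcoef \<alpha> j * R^j) *
            (if int n + int j \<ge> 0 then of_real (acoef \<alpha> (nat (int n + int j)) * R ^ nat (int n + int j)) * of_real (2 * pi) else 0))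
      = (\<lambda>j. of_real (bcoef \<alpha> j * acoef \<alpha> (n + j) * R ^ (n + 2 * j) * (2 * pi)))"
  proof (rule ext)
    fix j
    have Rp: "R ^ (n + 2 * j) = R^n * (R^j * R^j)" by (simp add: power_add power_mult power2_eq_square power_mult_distrib)
    show "complex_of_real (bcoef \<alpha> j * R^j) *
            (if int n + int j \<ge> 0 then of_real (acoef \<alpha> (nat (int n + int j)) * R ^ nat (int n + int j)) * of_real (2 * pi) else 0)
         = of_real (bcoef \<alpha> j * acoef \<alpha> (n + j) * R ^ (n + 2 * j) * (2 * pi))"
      unfolding Rp by (simp add: nat_add_distrib power_add mult_ac)
  qed
  have "(\<lambda>j. bcoef \<alpha> j * acoef \<alpha> (n + j) * R ^ (n + 2 * j) * (2 * pi)) sums (TR \<alpha> R n * (2 * pi))"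
    unfolding TR_def by (intro sums_mult2 summable_sums T_summable[OF assms])
  hence "(\<lambda>j. complex_of_real (bcoef \<alpha> j * acoef \<alpha> (n + j) * R ^ (n + 2 * j) * (2 * pi))) sums of_real (TR \<alpha> R n * (2 * pi))"
    by (rule sums_of_real)
  with S[unfolded eq] have "integral {-pi..pi} (\<lambda>\<theta>. phiR \<alpha> R \<theta> * exp (- \<i> * of_int (int n) * of_real \<theta>)) = of_real (TR \<alpha> R n * (2 * pi))"
    using sums_unique2 by blast
  thus ?thesis by (simp add: fourier_coeff_def)
qed

lemma FC_neg:
  assumes "\<alpha> > -1" "0 \<le> R" "R < 1"
  shows "fourier_coeff (phiR \<alpha> R) (- int n) = (-1)^n * of_real (TR \<alpha> R n)"
proof -
  define f where "f = (\<lambda>j. complex_of_real (bcoef \<alpha> j * R^j) *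
            (if - int n + int j \<ge> 0 then of_real (acoef \<alpha> (nat (- int n + int j)) * R ^ nat (- int n + int j)) * of_real (2 * pi) else 0))"
  have S: "f sums integral {-pi..pi} (\<lambda>\<theta>. phiR \<alpha> R \<theta> * exp (- \<i> * of_int (- int n) * of_real \<theta>))"
    unfolding f_def by (rule FC_R_sums[OF assms])
  have "(\<lambda>i. f (i + n)) sums integral {-pi..pi} (\<lambda>\<theta>. phiR \<alpha> R \<theta> * exp (- \<i> * of_int (- int n) * of_real \<theta>))"
    using S sums_zero_iff_shift[of n f] by (simp add: f_def)
  moreover have "f (i + n) = of_real ((-1)^n * (bcoef \<alpha> i * acoef \<alpha> (n + i) * R ^ (n + 2 * i) * (2 * pi)))" for i
  proof -
    have Rp: "R ^ (n + 2 * i) = R^n * (R^i * R^i)" by (simp add: power_add power_mult power2_eq_square power_mult_distrib)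
    show ?thesis unfolding Rp by (simp add: f_def bcoef_def power_add mult_ac add.commute)
  qed
  ultimately have S2: "(\<lambda>i. of_real ((-1)^n * (bcoef \<alpha> i * acoef \<alpha> (n + i) * R ^ (n + 2 * i) * (2 * pi))))
       sums integral {-pi..pi} (\<lambda>\<theta>. phiR \<alpha> R \<theta> * exp (- \<i> * of_int (- int n) * of_real \<theta>))" by simp
  have "(\<lambda>i. (-1)^n * (bcoef \<alpha> i * acoef \<alpha> (n + i) * R ^ (n + 2 * i) * (2 * pi))) sums ((-1)^n * (TR \<alpha> R n * (2 * pi)))"
    unfolding TR_def by (intro sums_mult sums_mult2 summable_sums T_summable[OF assms])
  hence "(\<lambda>i. complex_of_real ((-1)^n * (bcoef \<alpha> i * acoef \<alpha> (n + i) * R ^ (n + 2 * i) * (2 * pi)))) sums of_real ((-1)^n * (TR \<alpha> R n * (2 * pi)))"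
    by (rule sums_of_real)
  with S2 have "integral {-pi..pi} (\<lambda>\<theta>. phiR \<alpha> R \<theta> * exp (- \<i> * of_int (- int n) * of_real \<theta>)) = of_real ((-1)^n * (TR \<alpha> R n * (2 * pi)))"
    using sums_unique2 by blast
  thus ?thesis by (simp add: fourier_coeff_def)
qed

lemma sin_half_lower:
  assumes "0 \<le> x" "x \<le> pi / 2"
  shows "x / 2 \<le> sin x"
proof -
  have B: "\<bar>sin x - (\<Sum>m<3. sin_coeff m * x ^ m)\<bar> \<le> inverse (fact 3) * \<bar>x\<bar> ^ 3"
    by (rule Maclaurin_sin_bound)
  have s3: "(\<Sum>m<3. sin_coeff m * x ^ m) = x"
  proof -
    have "{..<3::nat} = {0,1,2}" by auto
    thus ?thesis by (simp add: sin_coeff_def)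
  qed
  have f3: "inverse (fact 3) * \<bar>x\<bar> ^ 3 = x^3 / 6"
  proof -
    have "fact 3 = (6::real)" by (simp add: fact_numeral)
    thus ?thesis using assms(1) by (simp add: inverse_eq_divide)
  qed
  have b: "x - x^3 / 6 \<le> sin x" using B unfolding s3 f3 abs_le_iff by linarith
  have "pi / 2 \<le> 8 / 5" using pi_approx(2) by simp
  hence x8: "x \<le> 8/5" using assms by simp
  have "x * x \<le> (8/5) * (8/5)" by (rule mult_mono) (use x8 assms(1) in auto)
  hence xx: "x^2 \<le> 3" by (simp add: power2_eq_square)
  have "x^3 = x * x^2" by (simp add: power2_eq_square power3_eq_cube)
  also have "\<dots> \<le> x * 3" by (rule mult_left_mono[OF xx assms(1)])
  finally have "x^3 / 6 \<le> x / 2" by simp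
  thus ?thesis using b by simp
qed

lemma abs_sin_lower:
  assumes "\<bar>w\<bar> \<le> pi / 2"
  shows "\<bar>w\<bar> / 2 \<le> \<bar>sin w\<bar>"
proof (cases "w \<ge> 0")
  case True thus ?thesis using sin_half_lower[of w] assms sin_ge_zero[of w] by simp
next
  case False thus ?thesis using sin_half_lower[of "-w"] assms sin_ge_zero[of "-w"] by simp
qed

lemma one_minus_cos_lower:
  assumes "\<bar>\<theta>\<bar> \<le> pi"
  shows "\<theta>^2 / 8 \<le> 1 - cos \<theta>"
proof -
  have c: "cos \<theta> = 1 - 2 * sin (\<theta>/2) ^ 2" using cos_double_sin[of "\<theta>/2"] by simp
  have "\<bar>\<theta>/2\<bar> / 2 \<le> \<bar>sin (\<theta>/2)\<bar>" by (rule abs_sin_lower) (use assms in simp)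
  hence "(\<bar>\<theta>/2\<bar> / 2)^2 \<le> \<bar>sin (\<theta>/2)\<bar>^2" by (rule power_mono) simp
  thus ?thesis unfolding c by (simp add: power_divide power2_abs)
qed

lemma one_plus_cos_lower:
  assumes "\<bar>\<theta>\<bar> \<le> pi"
  shows "(pi - \<bar>\<theta>\<bar>)^2 / 8 \<le> 1 + cos \<theta>"
proof -
  define t where "t = pi - \<bar>\<theta>\<bar>"
  have "cos \<theta> = cos \<bar>\<theta>\<bar>" by (simp add: abs_if)
  also have "\<bar>\<theta>\<bar> = pi - t" by (simp add: t_def)
  also have "cos (pi - t) = - cos t" by (simp add: cos_diff)
  finally have "1 + cos \<theta> = 1 - cos t" by simp
  moreover have "t^2 / 8 \<le> 1 - cos t" by (rule one_minus_cos_lower) (use assms in \<open>auto simp: t_def\<close>)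
  ultimately show ?thesis by (simp add: t_def)
qed

lemma norm_base_sq:
  shows "(cmod (1 - of_real R * cis \<theta>))^2 = (1 - R)^2 + 2 * R * (1 - cos \<theta>)"
        "(cmod (1 + of_real R * cis (-\<theta>)))^2 = (1 - R)^2 + 2 * R * (1 + cos \<theta>)"
proof -
  have s: "sin \<theta> ^ 2 = 1 - cos \<theta> ^ 2" by (rule sin_squared_eq)
  have "(cmod (1 - of_real R * cis \<theta>))^2 = (1 - R * cos \<theta>)^2 + (R * sin \<theta>)^2"
    by (simp add: cmod_power2)
  also have "\<dots> = (1 - R)^2 + 2 * R * (1 - cos \<theta>)"
    unfolding power_mult_distrib s by (simp add: power2_eq_square algebra_simps)
  finally show "(cmod (1 - of_real R * cis \<theta>))^2 = (1 - R)^2 + 2 * R * (1 - cos \<theta>)" .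
  have "(cmod (1 + of_real R * cis (-\<theta>)))^2 = (1 + R * cos \<theta>)^2 + (R * sin \<theta>)^2"
    by (simp add: cmod_power2)
  also have "\<dots> = (1 - R)^2 + 2 * R * (1 + cos \<theta>)"
    unfolding power_mult_distrib s by (simp add: power2_eq_square algebra_simps)
  finally show "(cmod (1 + of_real R * cis (-\<theta>)))^2 = (1 - R)^2 + 2 * R * (1 + cos \<theta>)" .
qed

lemma norm_base_lower:
  assumes "1/2 \<le> R" "R \<le> 1" "\<bar>\<theta>\<bar> \<le> pi"
  shows "\<bar>\<theta>\<bar> / 3 \<le> cmod (1 - of_real R * cis \<theta>)"
        "(pi - \<bar>\<theta>\<bar>) / 3 \<le> cmod (1 + of_real R * cis (-\<theta>))"
proof -
  have c1: "0 \<le> 1 - cos \<theta>" "0 \<le> 1 + cos \<theta>" using cos_le_one[of \<theta>] cos_ge_minus_one[of \<theta>] by linarith+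
  have "(\<bar>\<theta>\<bar> / 3)^2 \<le> \<theta>^2 / 8" by (simp add: power_divide power2_abs)
  also have "\<dots> \<le> 1 - cos \<theta>" by (rule one_minus_cos_lower[OF assms(3)])
  also have "\<dots> \<le> 2 * R * (1 - cos \<theta>)" using mult_right_mono[of 1 "2*R" "1 - cos \<theta>"] assms c1 by simp
  also have "\<dots> \<le> (cmod (1 - of_real R * cis \<theta>))^2" unfolding norm_base_sq by simp
  finally show "\<bar>\<theta>\<bar> / 3 \<le> cmod (1 - of_real R * cis \<theta>)" by (rule power2_le_imp_le) simp
  have "((pi - \<bar>\<theta>\<bar>) / 3)^2 \<le> (pi - \<bar>\<theta>\<bar>)^2 / 8" by (simp add: power_divide)
  also have "\<dots> \<le> 1 + cos \<theta>" by (rule one_plus_cos_lower[OF assms(3)])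
  also have "\<dots> \<le> 2 * R * (1 + cos \<theta>)" using mult_right_mono[of 1 "2*R" "1 + cos \<theta>"] assms c1 by simp
  also have "\<dots> \<le> (cmod (1 + of_real R * cis (-\<theta>)))^2" unfolding norm_base_sq by simp
  finally show "(pi - \<bar>\<theta>\<bar>) / 3 \<le> cmod (1 + of_real R * cis (-\<theta>))" by (rule power2_le_imp_le) simp
qed

lemma norm_base_upper:
  assumes "0 \<le> R" "R \<le> 1"
  shows "cmod (1 - of_real R * cis \<theta>) \<le> 2" "cmod (1 + of_real R * cis (-\<theta>)) \<le> 2"
proof -
  have "cmod (1 - of_real R * cis \<theta>) \<le> cmod 1 + cmod (of_real R * cis \<theta>)" by (rule norm_triangle_ineq4)
  thus "cmod (1 - of_real R * cis \<theta>) \<le> 2" using assms by (simp add: norm_mult)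
  have "cmod (1 + of_real R * cis (-\<theta>)) \<le> cmod 1 + cmod (of_real R * cis (-\<theta>))" by (rule norm_triangle_ineq)
  thus "cmod (1 + of_real R * cis (-\<theta>)) \<le> 2" using assms by (simp add: norm_mult)
qed

lemma int_abs_powr:
  assumes "a > -1"
  shows "(\<lambda>\<theta>. \<bar>\<theta>\<bar> powr a) integrable_on {-pi..pi}"
proof (rule Henstock_Kurzweil_Integration.integrable_combine[where a="-pi" and c=0 and b=pi])
  have i: "(\<lambda>x. x powr a) integrable_on {0..pi}" by (rule integrable_on_powr_from_0) (use assms in auto)
  show "(\<lambda>\<theta>. \<bar>\<theta>\<bar> powr a) integrable_on {0..pi}"
    by (rule integrable_eq[OF i]) simp
  have "(\<lambda>x. (-x) powr a) integrable_on {-pi..-0}" by (rule iffD2[OF Henstock_Kurzweil_Integration.integrable_reflect_real i])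
  hence "(\<lambda>x. (-x) powr a) integrable_on {-pi..0}" by simp
  thus "(\<lambda>\<theta>. \<bar>\<theta>\<bar> powr a) integrable_on {-pi..0}"
    by (rule integrable_eq) simp_all
qed simp_all

lemma int_pi_minus_abs_powr:
  assumes "a > -1"
  shows "(\<lambda>\<theta>. (pi - \<bar>\<theta>\<bar>) powr a) integrable_on {-pi..pi}"
proof (rule Henstock_Kurzweil_Integration.integrable_combine[where a="-pi" and c=0 and b=pi])
  have i: "(\<lambda>x. x powr a) integrable_on cbox 0 pi" using integrable_on_powr_from_0[of a pi] assms by simp
  from integrable_affinity[OF i, of "-1" pi]
  have "(\<lambda>x. (pi - x) powr a) integrable_on {0..pi}" by simp
  thus "(\<lambda>\<theta>. (pi - \<bar>\<theta>\<bar>) powr a) integrable_on {0..pi}"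
    by (rule integrable_eq) simp
  from integrable_affinity[OF i, of 1 pi]
  have "(\<lambda>x. (x + pi) powr a) integrable_on {-pi..0}" by simp
  thus "(\<lambda>\<theta>. (pi - \<bar>\<theta>\<bar>) powr a) integrable_on {-pi..0}"
    by (rule integrable_eq) (simp add: add.commute)
qed simp_all

definition gdom :: "real \<Rightarrow> real \<Rightarrow> real" where
  "gdom \<alpha> \<theta> = (if 0 \<le> \<alpha> then 4 powr \<alpha> else (pi/6) powr \<alpha> * ((\<bar>\<theta>\<bar>/3) powr \<alpha> + ((pi - \<bar>\<theta>\<bar>)/3) powr \<alpha>))"

lemma gdom_integrable:
  assumes "\<alpha> > -1"
  shows "gdom \<alpha> integrable_on {-pi..pi}"
proof (cases "0 \<le> \<alpha>")
  case True
  have "(\<lambda>\<theta>::real. 4 powr \<alpha>) integrable_on {-pi..pi}" using integrable_const[of "4 powr \<alpha>" "-pi" pi] by simp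
  thus ?thesis unfolding gdom_def by (rule integrable_eq) (use True in simp)
next
  case False
  define c where "c = inverse (3 powr \<alpha>)"
  have "(\<lambda>\<theta>. (pi/6) powr \<alpha> * (c * \<bar>\<theta>\<bar> powr \<alpha> + c * (pi - \<bar>\<theta>\<bar>) powr \<alpha>)) integrable_on {-pi..pi}"
    apply (rule integrable_on_mult_right)
    apply (rule integrable_add)
     apply (rule integrable_on_mult_right)
     apply (rule int_abs_powr[OF assms])
    apply (rule integrable_on_mult_right)
    apply (rule int_pi_minus_abs_powr[OF assms])
    done
  thus ?thesis unfolding gdom_def
  proof (rule integrable_eq)
    fix \<theta> :: real assume \<theta>: "\<theta> \<in> {-pi..pi}"
    have e: "(x / 3) powr \<alpha> = c * x powr \<alpha>" if "0 \<le> x" for x :: real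
    proof -
      have "(x / 3) powr \<alpha> = x powr \<alpha> / 3 powr \<alpha>" by (rule powr_divide)
      also have "\<dots> = c * x powr \<alpha>" unfolding c_def divide_inverse by (rule mult.commute)
      finally show ?thesis .
    qed
    have "(\<bar>\<theta>\<bar> / 3) powr \<alpha> = c * \<bar>\<theta>\<bar> powr \<alpha>" by (rule e) simp
    moreover have "((pi - \<bar>\<theta>\<bar>) / 3) powr \<alpha> = c * (pi - \<bar>\<theta>\<bar>) powr \<alpha>" by (rule e) (use \<theta> in auto)
    ultimately show "(pi/6) powr \<alpha> * (c * \<bar>\<theta>\<bar> powr \<alpha> + c * (pi - \<bar>\<theta>\<bar>) powr \<alpha>)
        = (if 0 \<le> \<alpha> then 4 powr \<alpha> else (pi/6) powr \<alpha> * ((\<bar>\<theta>\<bar>/3) powr \<alpha> + ((pi - \<bar>\<theta>\<bar>)/3) powr \<alpha>))"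
      using False by simp
  qed
qed

lemma gdom_prod_bound:
  fixes u v a :: real
  assumes "a \<le> 0" "u > 0" "v > 0" "u + v = pi / 3"
  shows "u powr a * v powr a \<le> (pi/6) powr a * (u powr a + v powr a)"
proof (cases "u \<ge> pi / 6")
  case True
  have "u powr a \<le> (pi/6) powr a" by (rule powr_mono2'[OF assms(1) _ True]) simp
  hence "u powr a * v powr a \<le> (pi/6) powr a * v powr a" by (rule mult_right_mono) simp
  also have "\<dots> \<le> (pi/6) powr a * (u powr a + v powr a)" by (rule mult_left_mono) simp_all
  finally show ?thesis .
next
  case False
  hence "v \<ge> pi / 6" using assms(4) by simp
  have "v powr a \<le> (pi/6) powr a" by (rule powr_mono2'[OF assms(1) _ \<open>v \<ge> pi/6\<close>]) simp
  hence "u powr a * v powr a \<le> u powr a * (pi/6) powr a" by (rule mult_left_mono) simp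
  also have "\<dots> \<le> (pi/6) powr a * (u powr a + v powr a)" by (simp add: mult.commute mult_left_mono)
  finally show ?thesis .
qed

lemma phiR_bound:
  assumes "1/2 \<le> R" "R \<le> 1" "\<bar>\<theta>\<bar> \<le> pi" "\<theta> \<noteq> 0" "\<bar>\<theta>\<bar> \<noteq> pi"
  shows "norm (phiR \<alpha> R \<theta>) \<le> gdom \<alpha> \<theta>"
proof -
  define z1 where "z1 = 1 - of_real R * cis \<theta>"
  define z2 where "z2 = 1 + of_real R * cis (-\<theta>)"
  have n: "norm (phiR \<alpha> R \<theta>) = cmod z1 powr \<alpha> * cmod z2 powr \<alpha>"
    unfolding phiR_def z1_def z2_def by (simp add: norm_mult norm_powr_real_powr')
  have up: "cmod z1 \<le> 2" "cmod z2 \<le> 2" unfolding z1_def z2_def using norm_base_upper[of R \<theta>] assms by auto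
  have lo: "\<bar>\<theta>\<bar> / 3 \<le> cmod z1" "(pi - \<bar>\<theta>\<bar>) / 3 \<le> cmod z2"
    unfolding z1_def z2_def using norm_base_lower[OF assms(1-3)] by auto
  have pos: "\<bar>\<theta>\<bar> / 3 > 0" "(pi - \<bar>\<theta>\<bar>) / 3 > 0" using assms by auto
  show ?thesis
  proof (cases "0 \<le> \<alpha>")
    case True
    have "cmod z1 powr \<alpha> * cmod z2 powr \<alpha> \<le> 2 powr \<alpha> * 2 powr \<alpha>"
      by (intro mult_mono powr_mono2 True up) simp_all
    also have "\<dots> = 4 powr \<alpha>" by (simp add: powr_mult[symmetric])
    finally show ?thesis using True by (simp add: n gdom_def)
  next
    case False
    have "cmod z1 powr \<alpha> * cmod z2 powr \<alpha> \<le> (\<bar>\<theta>\<bar> / 3) powr \<alpha> * ((pi - \<bar>\<theta>\<bar>) / 3) powr \<alpha>"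
      using False pos lo by (intro mult_mono powr_mono2') simp_all
    also have "\<dots> \<le> (pi/6) powr \<alpha> * ((\<bar>\<theta>\<bar> / 3) powr \<alpha> + ((pi - \<bar>\<theta>\<bar>) / 3) powr \<alpha>)"
      by (rule gdom_prod_bound) (use False pos in \<open>auto simp: field_simps\<close>)
    finally show ?thesis using False by (simp add: n gdom_def)
  qed
qed

definition Sp :: "real set" where "Sp = {-pi..pi} - {-pi, 0, pi}"

lemma Sp_negl: "negligible (({-pi..pi} - Sp) \<union> (Sp - {-pi..pi}))"
  by (rule negligible_subset[of "{-pi,0,pi}"]) (auto simp: Sp_def)

lemma Sp_integral:
  fixes f :: "real \<Rightarrow> 'a::banach"
  shows "integral Sp f = integral {-pi..pi} f"
  by (rule integral_spike_set; rule negligible_subset[OF Sp_negl]) auto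

lemma Sp_integrable:
  fixes f :: "real \<Rightarrow> 'a::banach"
  shows "f integrable_on {-pi..pi} \<Longrightarrow> f integrable_on Sp"
  using integrable_spike_set_eq[OF Sp_negl, of f] by simp

lemma Sp_mem: "\<theta> \<in> Sp \<Longrightarrow> \<bar>\<theta>\<bar> \<le> pi \<and> \<theta> \<noteq> 0 \<and> \<bar>\<theta>\<bar> \<noteq> pi"
  by (auto simp: Sp_def)

lemma B_cont:
  assumes "0 \<le> R" "R < 1"
  shows "continuous_on S (\<lambda>\<theta>. (1 + of_real R * cis (-\<theta>)) powr complex_of_real \<alpha>)"
proof (intro continuous_on_powr_complex continuous_intros)
  show "S \<subseteq> {z. 0 \<le> Re (1 + complex_of_real R * cis (-z)) \<or> Im (1 + complex_of_real R * cis (-z)) \<noteq> 0}"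
    using base_Re(2)[OF assms] by (auto intro: less_imp_le)
  show "\<And>z. z \<in> S \<Longrightarrow> 1 + complex_of_real R * cis (-z) = 0 \<Longrightarrow> 0 < Re (complex_of_real \<alpha>)"
    using base_Re(2)[OF assms] by (metis less_irrefl zero_complex.sel(1))
qed

lemma phiR_cont:
  assumes "0 \<le> R" "R < 1"
  shows "continuous_on S (\<lambda>\<theta>. phiR \<alpha> R \<theta>)"
  unfolding phiR_def by (intro continuous_on_mult A_cont B_cont assms)

lemma phiR_isCont1:
  assumes "\<theta> \<in> Sp"
  shows "isCont (\<lambda>R. phiR \<alpha> R \<theta>) 1"
proof -
  have th: "\<bar>\<theta>\<bar> \<le> pi" "\<theta> \<noteq> 0" "\<bar>\<theta>\<bar> \<noteq> pi" using Sp_mem[OF assms] by auto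
  have "0 < \<theta>^2 / 8" using th by simp
  also have "\<dots> \<le> 1 - cos \<theta>" by (rule one_minus_cos_lower[OF th(1)])
  finally have r1: "Re (1 - of_real 1 * cis \<theta>) > 0" by simp
  have "0 < (pi - \<bar>\<theta>\<bar>)^2 / 8" using th by simp
  also have "\<dots> \<le> 1 + cos \<theta>" by (rule one_plus_cos_lower[OF th(1)])
  finally have r2: "Re (1 + of_real 1 * cis (-\<theta>)) > 0" by simp
  have n1: "(1 - of_real 1 * cis \<theta>) \<notin> \<real>\<^sub>\<le>\<^sub>0" using r1 by (auto simp: complex_nonpos_Reals_iff)
  have n2: "(1 + of_real 1 * cis (-\<theta>)) \<notin> \<real>\<^sub>\<le>\<^sub>0" using r2 by (auto simp: complex_nonpos_Reals_iff)
  show ?thesis unfolding phiR_def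
    by (intro isCont_mult isCont_powr_complex continuous_intros n1 n2)
qed

lemma phi_eq:
  assumes "\<theta> \<in> Sp"
  shows "phi \<alpha> \<theta> = phiR \<alpha> 1 \<theta>"
proof -
  have "((\<lambda>R. phiR \<alpha> R \<theta>) \<longlongrightarrow> phiR \<alpha> 1 \<theta>) (at 1)"
    using phiR_isCont1[OF assms] by (simp add: isCont_def)
  hence "((\<lambda>R. phiR \<alpha> R \<theta>) \<longlongrightarrow> phiR \<alpha> 1 \<theta>) (at_left 1)"
    by (rule Lim_at_imp_Lim_at_within)
  thus ?thesis unfolding phi_def by (rule tendsto_Lim[OF trivial_limit_at_left_real])
qed

definition Rk :: "nat \<Rightarrow> real" where "Rk k = 1 - 1 / (real k + 2)"

lemma Rk_props: "1/2 \<le> Rk k" "Rk k < 1" "0 \<le> Rk k"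
  by (auto simp: Rk_def field_simps)

lemma Rk_lim: "Rk \<longlonglongrightarrow> 1"
proof -
  have "(\<lambda>k. 1 - 1 / (real k + 2)) \<longlonglongrightarrow> 1" by real_asymp
  thus ?thesis by (simp add: Rk_def[abs_def])
qed

lemma Rk_filterlim: "filterlim Rk (at_left 1) sequentially"
  by (rule tendsto_imp_filterlim_at_left[OF Rk_lim]) (simp add: Rk_props)

lemma FC_lim:
  assumes "\<alpha> > -1"
  shows "(\<lambda>k. fourier_coeff (phiR \<alpha> (Rk k)) m) \<longlonglongrightarrow> fourier_coeff (phi \<alpha>) m"
proof -
  define ee where "ee = (\<lambda>\<theta>::real. exp (- \<i> * of_int m * of_real \<theta>))"
  define f where "f = (\<lambda>k \<theta>. phiR \<alpha> (Rk k) \<theta> * ee \<theta>)"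
  define g where "g = (\<lambda>\<theta>. phi \<alpha> \<theta> * ee \<theta>)"
  have nee: "norm (ee \<theta>) = 1" for \<theta> unfolding ee_def by (simp add: norm_exp_eq_Re)
  have fi: "f k integrable_on Sp" for k
  proof (rule Sp_integrable)
    show "f k integrable_on {-pi..pi}" unfolding f_def ee_def
      by (intro integrable_continuous_interval continuous_on_mult phiR_cont Rk_props continuous_intros)
  qed
  have hi: "gdom \<alpha> integrable_on Sp" by (rule Sp_integrable[OF gdom_integrable[OF assms]])
  have le: "norm (f k \<theta>) \<le> gdom \<alpha> \<theta>" if "\<theta> \<in> Sp" for k \<theta>
    using phiR_bound[of "Rk k" \<theta> \<alpha>] Sp_mem[OF that] Rk_props[of k]
    by (simp add: f_def norm_mult nee)
  have conv: "(\<lambda>k. f k \<theta>) \<longlonglongrightarrow> g \<theta>" if "\<theta> \<in> Sp" for \<theta>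
  proof -
    have "(\<lambda>k. phiR \<alpha> (Rk k) \<theta>) \<longlonglongrightarrow> phiR \<alpha> 1 \<theta>"
      by (rule isCont_tendsto_compose[OF phiR_isCont1[OF that] Rk_lim])
    thus ?thesis unfolding f_def g_def phi_eq[OF that] by (intro tendsto_mult tendsto_const)
  qed
  have "(\<lambda>k. integral Sp (f k)) \<longlonglongrightarrow> integral Sp g"
    by (rule dominated_convergence(2)[OF fi hi le conv])
  hence "(\<lambda>k. integral {-pi..pi} (f k) / of_real (2 * pi)) \<longlonglongrightarrow> integral {-pi..pi} g / of_real (2 * pi)"
    unfolding Sp_integral by (intro tendsto_divide tendsto_const) simp_all
  thus ?thesis unfolding fourier_coeff_def f_def g_def ee_def .
qed

lemma FC_phi_pos:
  assumes "\<alpha> > -1" "\<alpha> \<notin> \<int>" "n \<ge> N0 \<alpha>"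
  shows "fourier_coeff (phi \<alpha>) (int n) = of_real (acoef \<alpha> n * rho \<alpha> n)"
proof -
  have L1: "(\<lambda>k. fourier_coeff (phiR \<alpha> (Rk k)) (int n)) \<longlonglongrightarrow> fourier_coeff (phi \<alpha>) (int n)"
    by (rule FC_lim[OF assms(1)])
  have "(\<lambda>k. TR \<alpha> (Rk k) n) \<longlonglongrightarrow> acoef \<alpha> n * rho \<alpha> n"
    unfolding TR_def by (rule filterlim_compose[OF T_lim[OF assms] Rk_filterlim])
  hence "(\<lambda>k. complex_of_real (TR \<alpha> (Rk k) n)) \<longlonglongrightarrow> of_real (acoef \<alpha> n * rho \<alpha> n)"
    by (rule tendsto_of_real)
  moreover have "fourier_coeff (phiR \<alpha> (Rk k)) (int n) = complex_of_real (TR \<alpha> (Rk k) n)" for k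
    by (rule FC_pos[OF assms(1)]) (simp_all add: Rk_props)
  ultimately have L2: "(\<lambda>k. fourier_coeff (phiR \<alpha> (Rk k)) (int n)) \<longlonglongrightarrow> of_real (acoef \<alpha> n * rho \<alpha> n)"
    by simp
  show ?thesis using LIMSEQ_unique[OF L1 L2] .
qed

lemma FC_phi_neg:
  assumes "\<alpha> > -1" "\<alpha> \<notin> \<int>" "n \<ge> N0 \<alpha>"
  shows "fourier_coeff (phi \<alpha>) (- int n) = (-1)^n * of_real (acoef \<alpha> n * rho \<alpha> n)"
proof -
  have L1: "(\<lambda>k. fourier_coeff (phiR \<alpha> (Rk k)) (- int n)) \<longlonglongrightarrow> fourier_coeff (phi \<alpha>) (- int n)"
    by (rule FC_lim[OF assms(1)])
  have "(\<lambda>k. TR \<alpha> (Rk k) n) \<longlonglongrightarrow> acoef \<alpha> n * rho \<alpha> n"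
    unfolding TR_def by (rule filterlim_compose[OF T_lim[OF assms] Rk_filterlim])
  hence "(\<lambda>k. (-1)^n * complex_of_real (TR \<alpha> (Rk k) n)) \<longlonglongrightarrow> (-1)^n * of_real (acoef \<alpha> n * rho \<alpha> n)"
    by (intro tendsto_mult tendsto_const tendsto_of_real)
  moreover have "fourier_coeff (phiR \<alpha> (Rk k)) (- int n) = (-1)^n * complex_of_real (TR \<alpha> (Rk k) n)" for k
    by (rule FC_neg[OF assms(1)]) (simp_all add: Rk_props)
  ultimately have L2: "(\<lambda>k. fourier_coeff (phiR \<alpha> (Rk k)) (- int n)) \<longlonglongrightarrow> (-1)^n * of_real (acoef \<alpha> n * rho \<alpha> n)"
    by simp
  show ?thesis using LIMSEQ_unique[OF L1 L2] .
qed

theorem mainTheorem1: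
  fixes \<alpha> :: real
  assumes "\<alpha> > -1/2" and "\<alpha> \<notin> \<int>"
  shows "(\<lambda>n::nat. fourier_coeff (phi \<alpha>) (int n)
            - of_real (2 powr \<alpha> / Gamma (-\<alpha>) * real n powr (-\<alpha> - 1)))
           \<in> o(\<lambda>n. of_real (real n powr (-\<alpha> - 1))) \<and>
         (\<lambda>n::nat. fourier_coeff (phi \<alpha>) (- int n)
            - of_real ((-1) ^ n * (2 powr \<alpha> / Gamma (-\<alpha>)) * real n powr (-\<alpha> - 1)))
           \<in> o(\<lambda>n. of_real (real n powr (-\<alpha> - 1)))"
proof -
  have a1: "\<alpha> > -1" using assms(1) by simp
  define K where "K = 2 powr \<alpha> / Gamma (-\<alpha>)"
  define D where "D = (\<lambda>n. acoef \<alpha> n * real n powr (\<alpha> + 1) * rho \<alpha> n - K)"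
  have "(\<lambda>n. acoef \<alpha> n * real n powr (\<alpha> + 1) * rho \<alpha> n - K) \<longlonglongrightarrow> rGamma (-\<alpha>) * 2 powr \<alpha> - K"
    by (intro tendsto_diff tendsto_mult acoef_asymp rho_tendsto[OF a1 assms(2)] tendsto_const)
  moreover have "rGamma (-\<alpha>) * 2 powr \<alpha> - K = 0"
    by (simp add: K_def rGamma_inverse_Gamma field_simps)
  ultimately have D0: "D \<longlonglongrightarrow> 0" by (simp add: D_def)
  have ev: "eventually (\<lambda>n. n \<ge> N0 \<alpha> \<and> n > 0) sequentially"
    by (intro eventually_conj eventually_ge_at_top eventually_gt_at_top)
  have key: "acoef \<alpha> n * rho \<alpha> n / real n powr (-\<alpha> - 1) - K = D n" if "n > 0" for n
  proof -
    have "real n powr (-\<alpha> - 1) = inverse (real n powr (\<alpha> + 1))"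
      by (simp add: powr_minus[symmetric])
    thus ?thesis by (simp add: D_def divide_inverse mult_ac)
  qed
  have nz: "eventually (\<lambda>n. complex_of_real (real n powr (-\<alpha> - 1)) \<noteq> 0) sequentially"
    using eventually_gt_at_top[of 0] by eventually_elim simp
  show ?thesis
  proof
    show "(\<lambda>n::nat. fourier_coeff (phi \<alpha>) (int n) - of_real (2 powr \<alpha> / Gamma (-\<alpha>) * real n powr (-\<alpha> - 1)))
           \<in> o(\<lambda>n. of_real (real n powr (-\<alpha> - 1)))"
    proof (rule smalloI_tendsto[OF _ nz])
      have "(\<lambda>n. complex_of_real (D n)) \<longlonglongrightarrow> of_real 0" by (rule tendsto_of_real[OF D0])
      moreover have "eventually (\<lambda>n. complex_of_real (D n) =
          (fourier_coeff (phi \<alpha>) (int n) - of_real (2 powr \<alpha> / Gamma (-\<alpha>) * real n powr (-\<alpha> - 1))) /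
           of_real (real n powr (-\<alpha> - 1))) sequentially"
        using ev
      proof eventually_elim
        case (elim n)
        have p: "real n powr (-\<alpha> - 1) \<noteq> 0" using elim by simp
        have "(fourier_coeff (phi \<alpha>) (int n) - of_real (K * real n powr (-\<alpha> - 1))) / of_real (real n powr (-\<alpha> - 1))
            = of_real ((acoef \<alpha> n * rho \<alpha> n - K * real n powr (-\<alpha> - 1)) / real n powr (-\<alpha> - 1))"
          using FC_phi_pos[OF a1 assms(2) conjunct1[OF elim]] by simp
        also have "(acoef \<alpha> n * rho \<alpha> n - K * real n powr (-\<alpha> - 1)) / real n powr (-\<alpha> - 1)
            = acoef \<alpha> n * rho \<alpha> n / real n powr (-\<alpha> - 1) - K" using p by (simp add: field_simps)
        also have "\<dots> = D n" using key elim by simp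
        finally show ?case by (simp add: K_def)
      qed
      ultimately show "((\<lambda>n. (fourier_coeff (phi \<alpha>) (int n) - of_real (2 powr \<alpha> / Gamma (-\<alpha>) * real n powr (-\<alpha> - 1))) /
           of_real (real n powr (-\<alpha> - 1))) \<longlongrightarrow> 0) sequentially"
        by (simp add: Lim_transform_eventually)
    qed
    show "(\<lambda>n::nat. fourier_coeff (phi \<alpha>) (- int n) - of_real ((-1) ^ n * (2 powr \<alpha> / Gamma (-\<alpha>)) * real n powr (-\<alpha> - 1)))
           \<in> o(\<lambda>n. of_real (real n powr (-\<alpha> - 1)))"
    proof (rule smalloI_tendsto[OF _ nz])
      have "(\<lambda>n. complex_of_real ((-1)^n * D n)) \<longlonglongrightarrow> of_real 0"
      proof (rule tendsto_of_real)
        have "(\<lambda>n. norm ((-1)^n * D n)) \<longlonglongrightarrow> 0"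
          using tendsto_norm[OF D0] by (simp add: abs_mult)
        thus "(\<lambda>n. (-1)^n * D n) \<longlonglongrightarrow> 0" by (simp only: tendsto_norm_zero_iff)
      qed
      moreover have "eventually (\<lambda>n. complex_of_real ((-1)^n * D n) =
          (fourier_coeff (phi \<alpha>) (- int n) - of_real ((-1) ^ n * (2 powr \<alpha> / Gamma (-\<alpha>)) * real n powr (-\<alpha> - 1))) /
           of_real (real n powr (-\<alpha> - 1))) sequentially"
        using ev
      proof eventually_elim
        case (elim n)
        have p: "real n powr (-\<alpha> - 1) \<noteq> 0" using elim by simp
        have "(fourier_coeff (phi \<alpha>) (- int n) - of_real ((-1) ^ n * K * real n powr (-\<alpha> - 1))) / of_real (real n powr (-\<alpha> - 1))
            = of_real ((-1)^n * ((acoef \<alpha> n * rho \<alpha> n - K * real n powr (-\<alpha> - 1)) / real n powr (-\<alpha> - 1)))"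
          using FC_phi_neg[OF a1 assms(2) conjunct1[OF elim]] by (simp add: algebra_simps diff_divide_distrib)
        also have "(acoef \<alpha> n * rho \<alpha> n - K * real n powr (-\<alpha> - 1)) / real n powr (-\<alpha> - 1)
            = acoef \<alpha> n * rho \<alpha> n / real n powr (-\<alpha> - 1) - K" using p by (simp add: field_simps)
        also have "\<dots> = D n" using key elim by simp
        finally show ?case by (simp add: K_def)
      qed
      ultimately show "((\<lambda>n. (fourier_coeff (phi \<alpha>) (- int n) - of_real ((-1) ^ n * (2 powr \<alpha> / Gamma (-\<alpha>)) * real n powr (-\<alpha> - 1))) /
           of_real (real n powr (-\<alpha> - 1))) \<longlongrightarrow> 0) sequentially"
        by (simp add: Lim_transform_eventually)
    qed
  qed
qed

end
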